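(* Let $n\ge 3$, let $J_n\in M_n(\mathbb{C})$ be the nilpotent Jordan block $J_n=\sum_{i=1}^{n-1}E_{i,i+1}$, and let $B_n=E_{n-1,1}-E_{n,2}\in M_n(\mathbb{C})$. Then $\mathcal L(\{J_n,B_n\})=M_n(\mathbb{C})$, $l(\{J_n,B_n\})=2n-3$, and $l_0(\{J_n,B_n\})=2n-2$.
   Context: $E_{i,j}$ denotes the matrix unit with $1$ in position $(i,j)$ and $0$ elsewhere. For a finite subset $\mathcal S$ of $M_n(\mathbb{F})$: a word of length $m$ is a product $S_1\cdots S_m$ with $S_j\in\mathcal S$, the word of length $0$ being $I_n$. $\mathcal L_k(\mathcal S)$ is the span of words of length at most $k$ including $I_n$; $\mathcal L(\mathcal S)=\bigcup_k\mathcal L_k(\mathcal S)$; $\mathcal L_k^0(\mathcal S)$ is the span of words of length between $1$ and $k$ (identity not automatically included). $l(\mathcal S)$ is the smallest $k$ with $\mathcal L_k(\mathcal S)=\mathcal L_{k+1}(\mathcal S)$, and $l_0(\mathcal S)$ is the smallest $k$ with $\mathcal L^0_k(\mathcal S)=\mathcal L^0_{k+1}(\mathcal S)$. *)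

theory Defs
  imports "Jordan_Normal_Form.Matrix"
begin

text \<open>Matrices of size n x n are elements of carrier_mat n n; indices are 0-based,
  so the paper's E_{i,j} is the unit at position (i-1, j-1).\<close>

definition unit_mat :: "nat \<Rightarrow> nat \<Rightarrow> nat \<Rightarrow> 'a::{zero,one} mat" where
  "unit_mat n i j = mat n n (\<lambda>(a,b). if a = i \<and> b = j then 1 else 0)"

definition word_prod :: "nat \<Rightarrow> 'a::semiring_1 mat list \<Rightarrow> 'a mat" where
  "word_prod n ws = foldr (*) ws (1\<^sub>m n)"

definition lin_comb :: "nat \<Rightarrow> ('a::comm_ring_1 \<times> 'a mat) list \<Rightarrow> 'a mat" where
  "lin_comb n cs = foldr (\<lambda>(c,A) acc. c \<cdot>\<^sub>m A + acc) cs (0\<^sub>m n n)"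

definition mat_span :: "nat \<Rightarrow> 'a::comm_ring_1 mat set \<Rightarrow> 'a mat set" where
  "mat_span n A = {lin_comb n cs | cs. set (map snd cs) \<subseteq> A}"

definition words :: "nat \<Rightarrow> 'a::semiring_1 mat set \<Rightarrow> nat \<Rightarrow> nat \<Rightarrow> 'a mat set" where
  "words n S a b = {word_prod n ws | ws. set ws \<subseteq> S \<and> a \<le> length ws \<and> length ws \<le> b}"

definition Lk :: "nat \<Rightarrow> 'a::comm_ring_1 mat set \<Rightarrow> nat \<Rightarrow> 'a mat set" where
  "Lk n S k = mat_span n (words n S 0 k)"

definition L0k :: "nat \<Rightarrow> 'a::comm_ring_1 mat set \<Rightarrow> nat \<Rightarrow> 'a mat set" where
  "L0k n S k = mat_span n (words n S 1 k)"

definition Lalg :: "nat \<Rightarrow> 'a::comm_ring_1 mat set \<Rightarrow> 'a mat set" where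
  "Lalg n S = (\<Union>k. Lk n S k)"

definition lenL :: "nat \<Rightarrow> 'a::comm_ring_1 mat set \<Rightarrow> nat" where
  "lenL n S = (LEAST k. Lk n S k = Lk n S (Suc k))"

definition lenL0 :: "nat \<Rightarrow> 'a::comm_ring_1 mat set \<Rightarrow> nat" where
  "lenL0 n S = (LEAST k. L0k n S k = L0k n S (Suc k))"

definition Jblock :: "nat \<Rightarrow> complex mat" where
  "Jblock n = mat n n (\<lambda>(i,j). if j = Suc i then 1 else 0)"

definition Bmat :: "nat \<Rightarrow> complex mat" where
  "Bmat n = unit_mat n (n-2) 0 - unit_mat n (n-1) 1"

end

theory Submission
  imports Defs
begin


lemma lin_comb_carrier:
  "set (map snd cs) \<subseteq> carrier_mat n n \<Longrightarrow> lin_comb n cs \<in> carrier_mat n n"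
  by (induction cs) (auto simp: lin_comb_def)

lemma lin_comb_index:
  assumes "set (map snd cs) \<subseteq> carrier_mat n n" "i < n" "j < n"
  shows "lin_comb n cs $$ (i,j) = (\<Sum>(c,A)\<leftarrow>cs. c * A $$ (i,j))"
  using assms
proof (induction cs)
  case Nil then show ?case by (simp add: lin_comb_def)
next
  case (Cons a cs)
  obtain c A where a: "a = (c,A)" by fastforce
  have A: "A \<in> carrier_mat n n" using Cons a by auto
  have L: "lin_comb n cs \<in> carrier_mat n n" using Cons by (intro lin_comb_carrier) auto
  have "lin_comb n (a#cs) = c \<cdot>\<^sub>m A + lin_comb n cs" by (simp add: lin_comb_def a)
  then show ?case using Cons A L a by auto
qed

lemma span_carrier: "T \<subseteq> carrier_mat n n \<Longrightarrow> mat_span n T \<subseteq> carrier_mat n n"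
  unfolding mat_span_def using lin_comb_carrier by blast

lemma span_zero: "0\<^sub>m n n \<in> mat_span n T"
  unfolding mat_span_def by (rule CollectI, rule exI[of _ "[]"]) (simp add: lin_comb_def)

lemma span_gen: assumes "A \<in> T" "T \<subseteq> carrier_mat n n" shows "A \<in> mat_span n T"
proof -
  have A: "A \<in> carrier_mat n n" using assms by auto
  have "lin_comb n [(1,A)] = A" using A by (auto simp: lin_comb_def)
  then show ?thesis unfolding mat_span_def using assms(1)
    by (intro CollectI exI[of _ "[(1,A)]"]) auto
qed

lemma lin_comb_append:
  assumes "set (map snd cs) \<subseteq> carrier_mat n n" "set (map snd ds) \<subseteq> carrier_mat n n"
  shows "lin_comb n (cs @ ds) = lin_comb n cs + lin_comb n ds"
proof (rule eq_matI)
  have c: "lin_comb n (cs@ds) \<in> carrier_mat n n" "lin_comb n cs \<in> carrier_mat n n"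
    "lin_comb n ds \<in> carrier_mat n n" using assms by (auto intro!: lin_comb_carrier simp: image_subset_iff)
  then show "dim_row (lin_comb n (cs @ ds)) = dim_row (lin_comb n cs + lin_comb n ds)"
    "dim_col (lin_comb n (cs @ ds)) = dim_col (lin_comb n cs + lin_comb n ds)" by auto
  fix i j assume "i < dim_row (lin_comb n cs + lin_comb n ds)" "j < dim_col (lin_comb n cs + lin_comb n ds)"
  then have ij: "i < n" "j < n" using c by auto
  show "lin_comb n (cs @ ds) $$ (i, j) = (lin_comb n cs + lin_comb n ds) $$ (i, j)"
    using c ij assms by (simp add: lin_comb_index)
qed

lemma lin_comb_smult:
  assumes "set (map snd cs) \<subseteq> carrier_mat n n"
  shows "lin_comb n (map (\<lambda>(d,A). (c*d,A)) cs) = c \<cdot>\<^sub>m lin_comb n cs"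
proof (rule eq_matI)
  have c1: "lin_comb n (map (\<lambda>(d,A). (c*d,A)) cs) \<in> carrier_mat n n"
    using assms by (intro lin_comb_carrier) auto
  have c: "lin_comb n (map (\<lambda>(d,A). (c*d,A)) cs) \<in> carrier_mat n n" "lin_comb n cs \<in> carrier_mat n n"
    using c1 lin_comb_carrier[OF assms] by auto
  then show "dim_row (lin_comb n (map (\<lambda>(d,A). (c*d,A)) cs)) = dim_row (c \<cdot>\<^sub>m lin_comb n cs)"
    "dim_col (lin_comb n (map (\<lambda>(d,A). (c*d,A)) cs)) = dim_col (c \<cdot>\<^sub>m lin_comb n cs)" by auto
  fix i j assume "i < dim_row (c \<cdot>\<^sub>m lin_comb n cs)" "j < dim_col (c \<cdot>\<^sub>m lin_comb n cs)"
  then have ij: "i < n" "j < n" using c by auto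
  have s: "set (map snd (map (\<lambda>(d,A). (c*d,A)) cs)) \<subseteq> carrier_mat n n" using assms by auto
  have "lin_comb n (map (\<lambda>(d,A). (c*d,A)) cs) $$ (i,j) = (\<Sum>(d,A)\<leftarrow>(map (\<lambda>(d,A). (c*d,A)) cs). d * A $$ (i,j))"
    using lin_comb_index[OF s ij] .
  also have "\<dots> = (\<Sum>(d,A)\<leftarrow>cs. c * (d * A $$ (i,j)))"
    by (induction cs) (auto simp: mult.assoc)
  also have "\<dots> = c * (\<Sum>(d,A)\<leftarrow>cs. d * A $$ (i,j))"
    by (induction cs) (auto simp: distrib_left)
  finally show "lin_comb n (map (\<lambda>(d,A). (c*d,A)) cs) $$ (i,j) = (c \<cdot>\<^sub>m lin_comb n cs) $$ (i,j)"
    using c ij assms by (simp add: lin_comb_index)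
qed

lemma span_add: assumes "X \<in> mat_span n T" "Y \<in> mat_span n T" "T \<subseteq> carrier_mat n n"
  shows "X + Y \<in> mat_span n T"
proof -
  obtain cs ds where X: "X = lin_comb n cs" "set (map snd cs) \<subseteq> T"
    and Y: "Y = lin_comb n ds" "set (map snd ds) \<subseteq> T" using assms unfolding mat_span_def by blast
  have "X + Y = lin_comb n (cs@ds)" using X Y assms(3) by (simp add: lin_comb_append)
  then show ?thesis unfolding mat_span_def using X Y by (intro CollectI exI[of _ "cs@ds"]) auto
qed

lemma span_smult: assumes "X \<in> mat_span n T" "T \<subseteq> carrier_mat n n"
  shows "c \<cdot>\<^sub>m X \<in> mat_span n T"
proof -
  obtain cs where X: "X = lin_comb n cs" "set (map snd cs) \<subseteq> T"
    using assms unfolding mat_span_def by blast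
  have "c \<cdot>\<^sub>m X = lin_comb n (map (\<lambda>(d,A). (c*d,A)) cs)" using X assms(2) by (simp add: lin_comb_smult)
  moreover have "set (map snd (map (\<lambda>(d,A). (c*d,A)) cs)) \<subseteq> T" using X by auto
  ultimately show ?thesis unfolding mat_span_def by blast
qed

lemma span_diff: assumes "X \<in> mat_span n T" "Y \<in> mat_span n T" "T \<subseteq> carrier_mat n n"
  shows "X - Y \<in> mat_span n (T::'a::comm_ring_1 mat set)"
proof -
  have cX: "X \<in> carrier_mat n n" "Y \<in> carrier_mat n n" using assms span_carrier by blast+
  have "X - Y = X + (-1) \<cdot>\<^sub>m Y" using cX by (intro eq_matI) auto
  then show ?thesis using assms span_add span_smult by metis
qed

lemma span_lin_comb: assumes "set (map snd cs) \<subseteq> mat_span n T" "T \<subseteq> carrier_mat n n"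
  shows "lin_comb n cs \<in> mat_span n T"
  using assms(1)
proof (induction cs)
  case Nil then show ?case using span_zero by (simp add: lin_comb_def)
next
  case (Cons a cs)
  obtain c A where a: "a = (c,A)" by fastforce
  have "lin_comb n (a#cs) = c \<cdot>\<^sub>m A + lin_comb n cs" by (simp add: lin_comb_def a)
  then show ?case using Cons a span_add[OF span_smult[of A n T c]] assms(2) by auto
qed

lemma span_mono: "T \<subseteq> T' \<Longrightarrow> mat_span n T \<subseteq> mat_span n T'"
  unfolding mat_span_def by blast

lemma span_functional:
  assumes T: "T \<subseteq> carrier_mat n n" and f0: "\<forall>A\<in>T. f A = 0"
    and lin: "\<And>c A B. A \<in> carrier_mat n n \<Longrightarrow> B \<in> carrier_mat n n \<Longrightarrow> f (c \<cdot>\<^sub>m A + B) = c * f A + f B"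
    and z: "f (0\<^sub>m n n) = 0"
    and X: "X \<in> mat_span n T"
  shows "f X = 0"
proof -
  obtain cs where X: "X = lin_comb n cs" "set (map snd cs) \<subseteq> T" using X unfolding mat_span_def by blast
  have "f (lin_comb n cs) = 0" using X(2)
  proof (induction cs)
    case Nil then show ?case using z by (simp add: lin_comb_def)
  next
    case (Cons a cs)
    obtain c A where a: "a = (c,A)" by fastforce
    have "lin_comb n (a#cs) = c \<cdot>\<^sub>m A + lin_comb n cs" by (simp add: lin_comb_def a)
    moreover have "lin_comb n cs \<in> carrier_mat n n" using Cons T by (intro lin_comb_carrier) auto
    ultimately show ?case using Cons a T f0 lin by auto
  qed
  then show ?thesis using X by simp
qed



definition Bent :: "nat \<Rightarrow> nat \<Rightarrow> nat \<Rightarrow> complex" where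
  "Bent n i j = (if i = n-2 \<and> j = 0 then 1 else 0) - (if i = n-1 \<and> j = 1 then 1 else 0)"

lemma J_carrier[simp]: "Jblock n \<in> carrier_mat n n" by (simp add: Jblock_def)
lemma B_carrier[simp]: "Bmat n \<in> carrier_mat n n" by (simp add: Bmat_def unit_mat_def minus_carrier_mat)
lemma unit_carrier[simp]: "unit_mat n i j \<in> carrier_mat n n" by (simp add: unit_mat_def)
lemma unit_index: "a < n \<Longrightarrow> b < n \<Longrightarrow> unit_mat n i j $$ (a,b) = (if a = i \<and> b = j then 1 else 0)"
  by (simp add: unit_mat_def)
lemma J_index: "i < n \<Longrightarrow> j < n \<Longrightarrow> Jblock n $$ (i,j) = (if j = Suc i then 1 else 0)"
  by (simp add: Jblock_def)
lemma B_index: "i < n \<Longrightarrow> j < n \<Longrightarrow> Bmat n $$ (i,j) = Bent n i j"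
  by (simp add: Bmat_def unit_mat_def Bent_def)

lemma mult_index_sum: assumes "A \<in> carrier_mat n n" "Y \<in> carrier_mat n n" "i < n" "j < n"
  shows "(A * Y) $$ (i,j) = (\<Sum>k<n. A $$ (i,k) * Y $$ (k,j))"
  using assms by (simp add: scalar_prod_def lessThan_atLeast0)

lemma J_mult: assumes "Y \<in> carrier_mat n n" "i < n" "j < n"
  shows "(Jblock n * Y) $$ (i,j) = (if Suc i < n then Y $$ (Suc i, j) else 0)"
proof -
  have "(Jblock n * Y) $$ (i,j) = (\<Sum>k<n. Jblock n $$ (i,k) * Y $$ (k,j))"
    using assms by (simp add: mult_index_sum)
  also have "\<dots> = (\<Sum>k<n. (if k = Suc i then Y $$ (k,j) else 0))"
    using assms by (intro sum.cong) (auto simp: J_index)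
  also have "\<dots> = (if Suc i < n then Y $$ (Suc i, j) else 0)" by (simp add: sum.delta)
  finally show ?thesis .
qed

lemma mult_J: assumes "Y \<in> carrier_mat n n" "i < n" "j < n"
  shows "(Y * Jblock n) $$ (i,j) = (if 0 < j then Y $$ (i, j - 1) else 0)"
proof -
  have "(Y * Jblock n) $$ (i,j) = (\<Sum>k<n. Y $$ (i,k) * Jblock n $$ (k,j))"
    using assms by (simp add: mult_index_sum)
  also have "\<dots> = (\<Sum>k<n. (if k = j - 1 \<and> 0 < j then Y $$ (i,k) else 0))"
    using assms by (intro sum.cong) (auto simp: J_index)
  also have "\<dots> = (if 0 < j then Y $$ (i, j - 1) else 0)" using assms(3)
    by (cases "0<j") (simp_all add: sum.delta)
  finally show ?thesis .
qed

lemma B_mult: assumes "Y \<in> carrier_mat n n" "i < n" "j < n" "2 \<le> n"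
  shows "(Bmat n * Y) $$ (i,j) = (if i = n-2 then Y $$ (0, j) else 0) - (if i = n-1 then Y $$ (1, j) else 0)"
proof -
  have "(Bmat n * Y) $$ (i,j) = (\<Sum>k<n. Bmat n $$ (i,k) * Y $$ (k,j))"
    using assms by (simp add: mult_index_sum)
  also have "\<dots> = (\<Sum>k<n. (if i = n-2 \<and> k = 0 then Y $$ (k,j) else 0) - (if i = n-1 \<and> k = 1 then Y $$ (k,j) else 0))"
    using assms by (intro sum.cong) (auto simp: B_index Bent_def)
  also have "\<dots> = (if i = n-2 then Y $$ (0, j) else 0) - (if i = n-1 then Y $$ (1, j) else 0)"
    using assms(4) by (auto simp add: sum_subtractf sum.delta)
  finally show ?thesis .
qed

lemma mult_B: assumes "Y \<in> carrier_mat n n" "i < n" "j < n" "2 \<le> n"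
  shows "(Y * Bmat n) $$ (i,j) = (if j = 0 then Y $$ (i, n-2) else 0) - (if j = 1 then Y $$ (i, n-1) else 0)"
proof -
  have "(Y * Bmat n) $$ (i,j) = (\<Sum>k<n. Y $$ (i,k) * Bmat n $$ (k,j))"
    using assms by (simp add: mult_index_sum)
  also have "\<dots> = (\<Sum>k<n. (if j = 0 \<and> k = n-2 then Y $$ (i,k) else 0) - (if j = 1 \<and> k = n-1 then Y $$ (i,k) else 0))"
    using assms by (intro sum.cong) (auto simp: B_index Bent_def)
  also have "\<dots> = (if j = 0 then Y $$ (i, n-2) else 0) - (if j = 1 then Y $$ (i, n-1) else 0)"
    using assms(4) by (simp add: sum_subtractf sum.delta)
  finally show ?thesis .
qed



lemma word_prod_Cons: "word_prod n (x#ws) = x * word_prod n ws" by (simp add: word_prod_def)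
lemma word_prod_Nil: "word_prod n [] = 1\<^sub>m n" by (simp add: word_prod_def)

lemma word_prod_carrier: "set ws \<subseteq> carrier_mat n n \<Longrightarrow> word_prod n ws \<in> carrier_mat n n"
  by (induction ws) (auto simp: word_prod_def)

lemma word_prod_append:
  assumes "set xs \<subseteq> carrier_mat n n" "set ys \<subseteq> carrier_mat n n"
  shows "word_prod n (xs @ ys) = word_prod n xs * word_prod n ys"
  using assms(1)
proof (induction xs)
  case Nil then show ?case using word_prod_carrier[OF assms(2)] by (simp add: word_prod_Nil)
next
  case (Cons x xs)
  then show ?case using word_prod_carrier[OF assms(2)] word_prod_carrier[of xs n]
    by (simp add: word_prod_Cons assoc_mult_mat[of x n n _ n _ n])
qed

lemma mc[simp]: "A \<in> carrier_mat n n \<Longrightarrow> B \<in> carrier_mat n n \<Longrightarrow> A * B \<in> carrier_mat n n"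
  by (rule mult_carrier_mat)

abbreviation Jp :: "nat \<Rightarrow> nat \<Rightarrow> complex mat" where
  "Jp n p \<equiv> word_prod n (replicate p (Jblock n))"

lemma Jp_carrier[simp]: "Jp n p \<in> carrier_mat n n"
  by (rule word_prod_carrier) auto

lemma Jp_mult: assumes "X \<in> carrier_mat n n" "i < n" "j < n"
  shows "(Jp n p * X) $$ (i,j) = (if i + p < n then X $$ (i+p, j) else 0)"
  using assms(2)
proof (induction p arbitrary: i)
  case 0 then show ?case using assms by (simp add: word_prod_Nil)
next
  case (Suc p)
  have e: "Jp n (Suc p) * X = Jblock n * (Jp n p * X)"
    using assms by (simp add: word_prod_Cons assoc_mult_mat[of _ n n _ n _ n])
  have C: "Jp n p * X \<in> carrier_mat n n" using assms by simp
  have "(Jp n (Suc p) * X) $$ (i,j) = (if Suc i < n then (Jp n p * X) $$ (Suc i, j) else 0)"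
    unfolding e using J_mult[OF C Suc.prems assms(3)] .
  also have "\<dots> = (if i + Suc p < n then X $$ (i + Suc p, j) else 0)"
    using Suc.IH[of "Suc i"] by auto
  finally show ?case .
qed

lemma mult_Jp: assumes "X \<in> carrier_mat n n" "i < n" "j < n"
  shows "(X * Jp n q) $$ (i,j) = (if q \<le> j then X $$ (i, j - q) else 0)"
  using assms(1)
proof (induction q arbitrary: X)
  case 0 then show ?case using assms by (simp add: word_prod_Nil)
next
  case (Suc q)
  have "X * Jp n (Suc q) = (X * Jblock n) * Jp n q"
    using Suc assms by (simp add: word_prod_Cons assoc_mult_mat[of _ n n _ n _ n])
  moreover have "X * Jblock n \<in> carrier_mat n n" using Suc by simp
  ultimately show ?case using Suc assms by (auto simp: mult_J)
qed

lemma Jp_index: assumes "i < n" "j < n"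
  shows "Jp n p $$ (i,j) = (if i + p = j then 1 else 0)"
proof -
  have "Jp n p = Jp n p * 1\<^sub>m n" by (rule right_mult_one_mat[symmetric, OF Jp_carrier])
  then have "Jp n p $$ (i,j) = (Jp n p * 1\<^sub>m n) $$ (i,j)" by simp
  also have "\<dots> = (if i + p = j then 1 else 0)" using assms by (simp add: Jp_mult)
  finally show ?thesis .
qed

lemma JB_carrier: "{Jblock n, Bmat n} \<subseteq> carrier_mat n n" by auto

lemma word1_index:
  assumes "i < n" "j < n"
  shows "word_prod n (replicate p (Jblock n) @ Bmat n # replicate q (Jblock n)) $$ (i,j)
     = (if i + p < n \<and> q \<le> j then Bent n (i+p) (j-q) else 0)"
proof -
  have "word_prod n (replicate p (Jblock n) @ Bmat n # replicate q (Jblock n)) = Jp n p * (Bmat n * Jp n q)"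
    by (subst word_prod_append) (auto simp: word_prod_Cons)
  moreover have C: "Bmat n * Jp n q \<in> carrier_mat n n" by simp
  ultimately show ?thesis using assms by (simp add: Jp_mult[OF C] mult_Jp B_index)
qed

lemma word2_index:
  assumes "i < n" "j < n" "2 \<le> n"
  shows "word_prod n (replicate a (Jblock n) @ Bmat n # replicate c (Jblock n) @ Bmat n # replicate d (Jblock n)) $$ (i,j)
     = (if i + a < n then
          (if i + a = n-2 then (if 0 + c < n then (if d \<le> j then Bent n (0+c) (j-d) else 0) else 0) else 0)
        - (if i + a = n-1 then (if 1 + c < n then (if d \<le> j then Bent n (1+c) (j-d) else 0) else 0) else 0)
        else 0)"
proof -
  have E: "word_prod n (replicate a (Jblock n) @ Bmat n # replicate c (Jblock n) @ Bmat n # replicate d (Jblock n))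
     = Jp n a * (Bmat n * (Jp n c * (Bmat n * Jp n d)))"
  proof -
    have "word_prod n (replicate a (Jblock n) @ Bmat n # replicate c (Jblock n) @ Bmat n # replicate d (Jblock n))
      = Jp n a * word_prod n (Bmat n # replicate c (Jblock n) @ Bmat n # replicate d (Jblock n))"
      by (rule word_prod_append) auto
    also have "word_prod n (Bmat n # replicate c (Jblock n) @ Bmat n # replicate d (Jblock n))
       = Bmat n * word_prod n (replicate c (Jblock n) @ Bmat n # replicate d (Jblock n))"
      by (simp add: word_prod_Cons)
    also have "word_prod n (replicate c (Jblock n) @ Bmat n # replicate d (Jblock n))
       = Jp n c * word_prod n (Bmat n # replicate d (Jblock n))"
      by (rule word_prod_append) auto
    finally show ?thesis by (simp add: word_prod_Cons)
  qed
  have C1: "Bmat n * Jp n d \<in> carrier_mat n n" by simp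
  have C2: "Jp n c * (Bmat n * Jp n d) \<in> carrier_mat n n" by simp
  have C3: "Bmat n * (Jp n c * (Bmat n * Jp n d)) \<in> carrier_mat n n" by simp
  have e1: "\<And>x. x < n \<Longrightarrow> (Bmat n * Jp n d) $$ (x,j) = (if d \<le> j then Bent n x (j-d) else 0)"
    using assms by (simp add: mult_Jp B_index)
  have e2: "\<And>x. x < n \<Longrightarrow> (Jp n c * (Bmat n * Jp n d)) $$ (x,j) = (if x + c < n then (if d \<le> j then Bent n (x+c) (j-d) else 0) else 0)"
    using assms by (simp add: Jp_mult[OF C1] e1)
  have e3: "\<And>x. x < n \<Longrightarrow> (Bmat n * (Jp n c * (Bmat n * Jp n d))) $$ (x,j)
     = (if x = n-2 then (Jp n c * (Bmat n * Jp n d)) $$ (0,j) else 0) - (if x = n-1 then (Jp n c * (Bmat n * Jp n d)) $$ (1,j) else 0)"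
    using assms by (simp add: B_mult[OF C2])
  have n01: "0 < n" "1 < n" using assms by auto
  show ?thesis
  proof (cases "i + a < n")
    case True
    then show ?thesis unfolding E Jp_mult[OF C3 assms(1,2)] using True
      by (simp only: if_True e3[OF True] e2[OF n01(1)] e2[OF n01(2)])
  next
    case False
    then show ?thesis unfolding E Jp_mult[OF C3 assms(1,2)] by simp
  qed
qed

lemma JneB: "3 \<le> n \<Longrightarrow> Jblock n \<noteq> Bmat n"
proof
  assume "3 \<le> n" "Jblock n = Bmat n"
  then have "Jblock n $$ (0,1) = Bmat n $$ (0,1)" by simp
  then show False using \<open>3 \<le> n\<close> by (simp add: J_index B_index Bent_def)
qed

definition cntB :: "nat \<Rightarrow> complex mat list \<Rightarrow> nat" where
  "cntB n ws = length (filter (\<lambda>x. x = Bmat n) ws)"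

lemma weight:
  assumes "3 \<le> n" "set ws \<subseteq> {Jblock n, Bmat n}" "i < n" "j < n" "word_prod n ws $$ (i,j) \<noteq> 0"
  shows "int j + int (cntB n ws) * (int n - 1) = int i + int (length ws)"
  using assms(2-5)
proof (induction ws arbitrary: i)
  case Nil then show ?case by (simp add: word_prod_Nil cntB_def split: if_splits)
next
  case (Cons x ws)
  have W: "word_prod n ws \<in> carrier_mat n n" using Cons by (intro word_prod_carrier) auto
  have sw: "set ws \<subseteq> {Jblock n, Bmat n}" using Cons by auto
  show ?case
  proof (cases "x = Jblock n")
    case True
    then have "(Jblock n * word_prod n ws) $$ (i,j) \<noteq> 0" using Cons by (simp add: word_prod_Cons)
    then have "Suc i < n" "word_prod n ws $$ (Suc i, j) \<noteq> 0" using W Cons by (auto simp: J_mult split: if_splits)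
    then have "int j + int (cntB n ws) * (int n - 1) = int (Suc i) + int (length ws)" using Cons sw by blast
    moreover have "cntB n (x#ws) = cntB n ws" using True JneB[OF assms(1)] by (simp add: cntB_def)
    ultimately show ?thesis by simp
  next
    case False
    then have xB: "x = Bmat n" using Cons by auto
    then have "(Bmat n * word_prod n ws) $$ (i,j) \<noteq> 0" using Cons by (simp add: word_prod_Cons)
    then have "(i = n-2 \<and> word_prod n ws $$ (0, j) \<noteq> 0) \<or> (i = n-1 \<and> word_prod n ws $$ (1, j) \<noteq> 0)"
      using W Cons assms(1) by (auto simp: B_mult split: if_splits)
    moreover have "cntB n (x#ws) = Suc (cntB n ws)" using xB by (simp add: cntB_def)
    moreover have "0 < n" "1 < n" using assms(1) by auto
    moreover note I0 = Cons.IH[OF sw, of 0] and I1 = Cons.IH[OF sw, of 1]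
    ultimately show ?thesis using Cons.prems assms(1) by (auto simp: algebra_simps of_nat_diff)
  qed
qed

lemma cnt0_replicate:
  assumes "set ws \<subseteq> {Jblock n, Bmat n}" "cntB n ws = 0"
  shows "ws = replicate (length ws) (Jblock n)"
proof -
  have "\<forall>x\<in>set ws. x = Jblock n" using assms by (auto simp: cntB_def filter_empty_conv)
  then show ?thesis by (simp add: replicate_length_same)
qed

lemma cnt1_decomp:
  assumes "3 \<le> n" "set ws \<subseteq> {Jblock n, Bmat n}" "cntB n ws = 1"
  shows "\<exists>p q. ws = replicate p (Jblock n) @ Bmat n # replicate q (Jblock n)"
  using assms(2,3)
proof (induction ws)
  case Nil then show ?case by (simp add: cntB_def)
next
  case (Cons x ws)
  show ?case
  proof (cases "x = Bmat n")
    case True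
    then have "cntB n ws = 0" using Cons by (simp add: cntB_def)
    then have "ws = replicate (length ws) (Jblock n)" using Cons by (intro cnt0_replicate) auto
    then show ?thesis using True by (intro exI[of _ 0] exI[of _ "length ws"]) simp
  next
    case False
    then have xJ: "x = Jblock n" using Cons by auto
    then have "cntB n ws = 1" using Cons False by (simp add: cntB_def)
    then obtain p q where "ws = replicate p (Jblock n) @ Bmat n # replicate q (Jblock n)" using Cons by auto
    then show ?thesis using xJ by (intro exI[of _ "Suc p"] exI[of _ q]) simp
  qed
qed

lemma words_carrier: "words n {Jblock n, Bmat n} lo hi \<subseteq> carrier_mat n n"
  unfolding words_def using word_prod_carrier[of _ n] JB_carrier by blast

lemma word_in_span:
  assumes "set ws \<subseteq> {Jblock n, Bmat n}" "lo \<le> length ws" "length ws \<le> hi"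
  shows "word_prod n ws \<in> mat_span n (words n {Jblock n, Bmat n} lo hi)"
  by (rule span_gen[OF _ words_carrier]) (use assms in \<open>auto simp: words_def\<close>)



lemma LB_generic:
  fixes f :: "complex mat \<Rightarrow> complex"
  assumes lin: "\<And>c A B. A \<in> carrier_mat n n \<Longrightarrow> B \<in> carrier_mat n n \<Longrightarrow> f (c \<cdot>\<^sub>m A + B) = c * f A + f B"
    and z: "f (0\<^sub>m n n) = 0"
    and van: "\<And>ws. set ws \<subseteq> {Jblock n, Bmat n} \<Longrightarrow> lo \<le> length ws \<Longrightarrow> length ws \<le> k \<Longrightarrow> f (word_prod n ws) = 0"
    and w0: "set wz \<subseteq> {Jblock n, Bmat n}" "lo \<le> length wz" "length wz \<le> Suc k" "f (word_prod n wz) \<noteq> 0"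
  shows "mat_span n (words n {Jblock n, Bmat n} lo k) \<noteq> mat_span n (words n {Jblock n, Bmat n} lo (Suc k))"
proof
  assume eq: "mat_span n (words n {Jblock n, Bmat n} lo k) = mat_span n (words n {Jblock n, Bmat n} lo (Suc k))"
  have "word_prod n wz \<in> mat_span n (words n {Jblock n, Bmat n} lo (Suc k))"
    using w0 by (intro word_in_span) auto
  then have m: "word_prod n wz \<in> mat_span n (words n {Jblock n, Bmat n} lo k)" using eq by simp
  have "f (word_prod n wz) = 0"
    by (rule span_functional[OF words_carrier _ lin z m]) (auto simp: words_def intro: van)
  then show False using w0 by simp
qed

lemma lin_entry2: fixes x :: complex assumes "a < n" "b < n" "c < n" "d < n" "A \<in> carrier_mat n n" "B \<in> carrier_mat n n"
  shows "(x \<cdot>\<^sub>m A + B) $$ (a,b) - (x \<cdot>\<^sub>m A + B) $$ (c,d) = x * (A $$ (a,b) - A $$ (c,d)) + (B $$ (a,b) - B $$ (c,d))"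
  using assms by (simp add: right_diff_distrib)

lemma LB1:
  assumes n: "3 \<le> n" and lo: "lo \<le> 1" and k: "Suc k < n"
  shows "mat_span n (words n {Jblock n, Bmat n} lo k) \<noteq> mat_span n (words n {Jblock n, Bmat n} lo (Suc k))"
proof (rule LB_generic[where f = "\<lambda>X. X $$ (0, Suc k)" and wz = "replicate (Suc k) (Jblock n)"])
  fix ws assume ws: "set ws \<subseteq> {Jblock n, Bmat n}" "lo \<le> length ws" "length ws \<le> k"
  show "word_prod n ws $$ (0, Suc k) = 0"
  proof (rule ccontr)
    assume "word_prod n ws $$ (0, Suc k) \<noteq> 0"
    then have "int (Suc k) + int (cntB n ws) * (int n - 1) = int 0 + int (length ws)"
      using weight[OF n ws(1)] k by blast
    moreover have "int (cntB n ws) * (int n - 1) \<ge> 0" using n by simp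
    ultimately show False using ws(3) by linarith
  qed
next
  show "Jp n (Suc k) $$ (0, Suc k) \<noteq> 0" using k Jp_index[of 0 n "Suc k" "Suc k"] by simp
qed (use k lo in auto)

lemma LB2:
  assumes n: "3 \<le> n" and lo: "lo \<le> 1" and m: "1 \<le> m" "m \<le> n - 2" and k: "Suc k = n - 1 + m"
  shows "mat_span n (words n {Jblock n, Bmat n} lo k) \<noteq> mat_span n (words n {Jblock n, Bmat n} lo (Suc k))"
proof (rule LB_generic[where f = "\<lambda>X. X $$ (0, m) - X $$ (1, Suc m)"
      and wz = "replicate (n-2) (Jblock n) @ Bmat n # replicate m (Jblock n)"])
  fix x :: complex and A B :: "complex mat" assume "A \<in> carrier_mat n n" "B \<in> carrier_mat n n"
  then show "(x \<cdot>\<^sub>m A + B) $$ (0, m) - (x \<cdot>\<^sub>m A + B) $$ (1, Suc m) = x * (A $$ (0, m) - A $$ (1, Suc m)) + (B $$ (0, m) - B $$ (1, Suc m))"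
    using n m by (intro lin_entry2) auto
next
  show "(0\<^sub>m n n :: complex mat) $$ (0, m) - (0\<^sub>m n n :: complex mat) $$ (1, Suc m) = 0" using n m by simp
next
  fix ws assume ws: "set ws \<subseteq> {Jblock n, Bmat n}" "lo \<le> length ws" "length ws \<le> k"
  show "word_prod n ws $$ (0, m) - word_prod n ws $$ (1, Suc m) = 0"
  proof (cases "word_prod n ws $$ (0, m) = 0 \<and> word_prod n ws $$ (1, Suc m) = 0")
    case True then show ?thesis by simp
  next
    case False
    then have "int m + int (cntB n ws) * (int n - 1) = int 0 + int (length ws)
      \<or> int (Suc m) + int (cntB n ws) * (int n - 1) = int 1 + int (length ws)"
      using weight[OF n ws(1), of 0 m] weight[OF n ws(1), of 1 "Suc m"] n m by force
    then have e: "int m + int (cntB n ws) * (int n - 1) = int (length ws)" by auto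
    have "cntB n ws = 0"
    proof (rule ccontr)
      assume "cntB n ws \<noteq> 0"
      then have "int (cntB n ws) * (int n - 1) \<ge> int n - 1" using n by simp
      then show False using e ws(3) k n by linarith
    qed
    then have len: "length ws = m" and rep: "ws = replicate (length ws) (Jblock n)"
      using e cnt0_replicate[OF ws(1)] by auto
    have W: "word_prod n ws = Jp n m" using rep len by (metis)
    have "m < n" "Suc m < n" using n m by auto
    then show ?thesis unfolding W using Jp_index[of 0 n m m] Jp_index[of 1 n "Suc m" m] by simp
  qed
next
  show "word_prod n (replicate (n - 2) (Jblock n) @ Bmat n # replicate m (Jblock n)) $$ (0, m) -
    word_prod n (replicate (n - 2) (Jblock n) @ Bmat n # replicate m (Jblock n)) $$ (1, Suc m) \<noteq> 0"
    using n m by (simp add: word1_index Bent_def)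
qed (use k lo n m in auto)



lemma LB0:
  assumes n: "3 \<le> n"
  shows "mat_span n (words n {Jblock n, Bmat n} 1 (2*n-3)) \<noteq> mat_span n (words n {Jblock n, Bmat n} 1 (Suc (2*n-3)))"
proof (rule LB_generic[where f = "\<lambda>X. \<Sum>i<n. X $$ (i,i)"
      and wz = "Bmat n # replicate (n-2) (Jblock n) @ Bmat n # replicate (n-2) (Jblock n)"])
  fix x :: complex and A B :: "complex mat" assume "A \<in> carrier_mat n n" "B \<in> carrier_mat n n"
  then show "(\<Sum>i<n. (x \<cdot>\<^sub>m A + B) $$ (i, i)) = x * (\<Sum>i<n. A $$ (i, i)) + (\<Sum>i<n. B $$ (i, i))"
    by (simp add: sum.distrib sum_distrib_left)
next
  show "(\<Sum>i<n. (0\<^sub>m n n :: complex mat) $$ (i, i)) = 0" by simp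
next
  fix ws assume ws: "set ws \<subseteq> {Jblock n, Bmat n}" "1 \<le> length ws" "length ws \<le> 2*n-3"
  show "(\<Sum>i<n. word_prod n ws $$ (i, i)) = 0"
  proof (cases "\<forall>i<n. word_prod n ws $$ (i,i) = 0")
    case True then show ?thesis by simp
  next
    case False
    then obtain i where i: "i < n" "word_prod n ws $$ (i,i) \<noteq> 0" by auto
    have e: "int (cntB n ws) * (int n - 1) = int (length ws)"
      using weight[OF n ws(1) i(1) i(1) i(2)] by simp
    have c1: "cntB n ws = 1"
    proof -
      have "cntB n ws \<noteq> 0"
      proof
        assume "cntB n ws = 0" then show False using e ws(2) by simp
      qed
      moreover have "cntB n ws < 2"
      proof (rule ccontr)
        assume "\<not> cntB n ws < 2"
        then have "int (cntB n ws) * (int n - 1) \<ge> 2 * (int n - 1)" using n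
          by (intro mult_right_mono) auto
        moreover have "int (length ws) \<le> 2 * int n - 3" using ws(3) n by linarith
        ultimately show False using e by (smt (verit))
      qed
      ultimately show ?thesis by simp
    qed
    then have len: "length ws = n - 1" using e n by (simp add: of_nat_diff)
    obtain p q where pq: "ws = replicate p (Jblock n) @ Bmat n # replicate q (Jblock n)"
      using cnt1_decomp[OF n ws(1) c1] by blast
    have pq2: "p + q = n - 2" using len pq by simp
    have d: "\<And>i. i < n \<Longrightarrow> word_prod n ws $$ (i,i) = (if i = q then 1 else 0) - (if i = Suc q then 1 else 0)"
      unfolding pq using pq2 n by (auto simp: word1_index Bent_def)
    have "(\<Sum>i<n. word_prod n ws $$ (i, i)) = (\<Sum>i<n. (if i = q then 1 else 0) - (if i = Suc q then 1 else 0))"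
      by (rule sum.cong) (auto simp: d)
    also have "\<dots> = 0" using pq2 n by (simp add: sum_subtractf)
    finally show ?thesis .
  qed
next
  have d: "\<And>i. i < n \<Longrightarrow> word_prod n (Bmat n # replicate (n-2) (Jblock n) @ Bmat n # replicate (n-2) (Jblock n)) $$ (i,i)
     = (if i = n-2 then 1 else 0) + (if i = n-1 then 1 else 0)"
  proof -
    fix i assume i: "i < n"
    have "word_prod n (Bmat n # replicate (n-2) (Jblock n) @ Bmat n # replicate (n-2) (Jblock n)) $$ (i,i)
      = (if i = n-2 then Bent n (n-2) (i-(n-2)) else 0) - (if i = n-1 then Bent n (n-1) (i-(n-2)) else 0)"
      using word2_index[of i n i 0 "n-2" "n-2"] i n by (auto simp: Suc_diff_Suc numeral_2_eq_2)
    then show "word_prod n (Bmat n # replicate (n-2) (Jblock n) @ Bmat n # replicate (n-2) (Jblock n)) $$ (i,i)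
     = (if i = n-2 then 1 else 0) + (if i = n-1 then 1 else 0)" using n by (auto simp: Bent_def)
  qed
  have "(\<Sum>i<n. word_prod n (Bmat n # replicate (n-2) (Jblock n) @ Bmat n # replicate (n-2) (Jblock n)) $$ (i,i))
     = (\<Sum>i<n. (if i = n-2 then 1 else 0) + (if i = n-1 then (1::complex) else 0))"
    by (rule sum.cong) (auto simp: d)
  also have "\<dots> = 2" using n by (simp add: sum.distrib)
  finally show "(\<Sum>i<n. word_prod n (Bmat n # replicate (n-2) (Jblock n) @ Bmat n # replicate (n-2) (Jblock n)) $$ (i,i)) \<noteq> 0"
    by simp
qed (use n in auto)



lemma set_w1[simp]: "set (replicate p (Jblock n) @ Bmat n # replicate q (Jblock n)) \<subseteq> {Jblock n, Bmat n}"
  by auto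
lemma set_w2[simp]: "set (replicate a (Jblock n) @ Bmat n # replicate c (Jblock n) @ Bmat n # replicate d (Jblock n)) \<subseteq> {Jblock n, Bmat n}"
  by auto
lemma set_w0[simp]: "set (replicate p (Jblock n)) \<subseteq> {Jblock n, Bmat n}"
  by auto

lemma wp_dims[simp]:
  assumes "set ws \<subseteq> {Jblock n, Bmat n}"
  shows "dim_row (word_prod n ws) = n" "dim_col (word_prod n ws) = n"
proof -
  have "word_prod n ws \<in> carrier_mat n n" using assms JB_carrier by (intro word_prod_carrier) blast
  then show "dim_row (word_prod n ws) = n" "dim_col (word_prod n ws) = n" by auto
qed

lemma unit_dims[simp]: "dim_row (unit_mat n i j) = n" "dim_col (unit_mat n i j) = n"
  by (simp_all add: unit_mat_def)

lemma wit_lower: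
  assumes n: "3 \<le> n" and ij: "j0 < i0" "i0 < n"
  shows "unit_mat n i0 j0 = (-1) \<cdot>\<^sub>m word_prod n (replicate (n-1-i0) (Jblock n) @ Bmat n # replicate (n-3) (Jblock n) @ Bmat n # replicate j0 (Jblock n))"
proof (rule eq_matI)
  fix i j assume "i < dim_row ((-1) \<cdot>\<^sub>m word_prod n (replicate (n-1-i0) (Jblock n) @ Bmat n # replicate (n-3) (Jblock n) @ Bmat n # replicate j0 (Jblock n)))"
    "j < dim_col ((-1) \<cdot>\<^sub>m word_prod n (replicate (n-1-i0) (Jblock n) @ Bmat n # replicate (n-3) (Jblock n) @ Bmat n # replicate j0 (Jblock n)))"
  then have ij': "i < n" "j < n" by auto
  show "unit_mat n i0 j0 $$ (i, j) = ((-1) \<cdot>\<^sub>m word_prod n (replicate (n-1-i0) (Jblock n) @ Bmat n # replicate (n-3) (Jblock n) @ Bmat n # replicate j0 (Jblock n))) $$ (i, j)"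
    using ij' n ij by (simp add: word2_index unit_index Bent_def) arith
qed auto

lemma wit_upper0:
  assumes n: "3 \<le> n" and d: "1 \<le> d" "d < n"
  shows "unit_mat n 0 d = (-1) \<cdot>\<^sub>m word_prod n (replicate (n-1) (Jblock n) @ Bmat n # replicate (d-1) (Jblock n))"
proof (rule eq_matI)
  fix i j assume "i < dim_row ((-1) \<cdot>\<^sub>m word_prod n (replicate (n-1) (Jblock n) @ Bmat n # replicate (d-1) (Jblock n)))"
    "j < dim_col ((-1) \<cdot>\<^sub>m word_prod n (replicate (n-1) (Jblock n) @ Bmat n # replicate (d-1) (Jblock n)))"
  then have ij': "i < n" "j < n" by auto
  show "unit_mat n 0 d $$ (i, j) = ((-1) \<cdot>\<^sub>m word_prod n (replicate (n-1) (Jblock n) @ Bmat n # replicate (d-1) (Jblock n))) $$ (i, j)"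
    using ij' n d by (simp add: word1_index unit_index Bent_def) arith
qed auto

lemma wit_top:
  assumes n: "3 \<le> n"
  shows "unit_mat n 0 (n-1) = Jp n (n-1)"
proof (rule eq_matI)
  fix i j assume "i < dim_row (Jp n (n-1))" "j < dim_col (Jp n (n-1))"
  then have ij': "i < n" "j < n" by auto
  show "unit_mat n 0 (n-1) $$ (i, j) = Jp n (n-1) $$ (i, j)"
    using ij' n by (simp add: Jp_index unit_index) arith
qed auto

lemma wit_diff:
  assumes n: "3 \<le> n" and rd: "r + d + 1 < n"
  shows "unit_mat n r (r+d) - unit_mat n (r+1) (r+1+d) = word_prod n (replicate (n-2-r) (Jblock n) @ Bmat n # replicate (r+d) (Jblock n))"
proof (rule eq_matI)
  fix i j assume "i < dim_row (word_prod n (replicate (n-2-r) (Jblock n) @ Bmat n # replicate (r+d) (Jblock n)))"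
    "j < dim_col (word_prod n (replicate (n-2-r) (Jblock n) @ Bmat n # replicate (r+d) (Jblock n)))"
  then have ij': "i < n" "j < n" by auto
  show "(unit_mat n r (r+d) - unit_mat n (r+1) (r+1+d)) $$ (i, j) = word_prod n (replicate (n-2-r) (Jblock n) @ Bmat n # replicate (r+d) (Jblock n)) $$ (i, j)"
    using ij' n rd by (simp add: word1_index unit_index Bent_def) arith
qed auto

lemma wit_pair:
  assumes n: "3 \<le> n" and q: "q + 1 < n"
  shows "unit_mat n q q + unit_mat n (q+1) (q+1) = word_prod n (replicate (n-2-q) (Jblock n) @ Bmat n # replicate (n-2) (Jblock n) @ Bmat n # replicate q (Jblock n))"
proof (rule eq_matI)
  fix i j assume "i < dim_row (word_prod n (replicate (n-2-q) (Jblock n) @ Bmat n # replicate (n-2) (Jblock n) @ Bmat n # replicate q (Jblock n)))"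
    "j < dim_col (word_prod n (replicate (n-2-q) (Jblock n) @ Bmat n # replicate (n-2) (Jblock n) @ Bmat n # replicate q (Jblock n)))"
  then have ij': "i < n" "j < n" by auto
  show "(unit_mat n q q + unit_mat n (q+1) (q+1)) $$ (i, j) = word_prod n (replicate (n-2-q) (Jblock n) @ Bmat n # replicate (n-2) (Jblock n) @ Bmat n # replicate q (Jblock n)) $$ (i, j)"
    using ij' n q by (simp add: word2_index unit_index Bent_def) arith
qed auto



lemma sub_self: "A \<in> carrier_mat n n \<Longrightarrow> A - A = (0\<^sub>m n n :: complex mat)"
  by (intro eq_matI) auto
lemma sub_sub: "A \<in> carrier_mat n n \<Longrightarrow> B \<in> carrier_mat n n \<Longrightarrow> A - (A - B) = (B :: complex mat)"
  by (intro eq_matI) auto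
lemma sub_add: "A \<in> carrier_mat n n \<Longrightarrow> B \<in> carrier_mat n n \<Longrightarrow> C \<in> carrier_mat n n \<Longrightarrow> (A - B) + (B - C) = (A - C :: complex mat)"
  by (intro eq_matI) auto

context
  fixes n lo hi :: nat
  assumes n: "3 \<le> n" and lo: "lo \<le> 1" and hi: "2*n - 3 \<le> hi"
begin

abbreviation V where "V \<equiv> mat_span n (words n {Jblock n, Bmat n} lo hi)"

lemma Vc: "words n {Jblock n, Bmat n} lo hi \<subseteq> carrier_mat n n" by (rule words_carrier)

lemma in_lower: assumes "j0 < i0" "i0 < n" shows "unit_mat n i0 j0 \<in> V"
proof -
  have "word_prod n (replicate (n-1-i0) (Jblock n) @ Bmat n # replicate (n-3) (Jblock n) @ Bmat n # replicate j0 (Jblock n)) \<in> V"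
    using assms n lo hi by (intro word_in_span) auto
  then show ?thesis unfolding wit_lower[OF n assms] by (rule span_smult[OF _ Vc])
qed

lemma in_diff: assumes "r + d + 1 < n" shows "unit_mat n r (r+d) - unit_mat n (r+1) (r+1+d) \<in> V"
proof -
  have "word_prod n (replicate (n-2-r) (Jblock n) @ Bmat n # replicate (r+d) (Jblock n)) \<in> V"
    using assms n lo hi by (intro word_in_span) auto
  then show ?thesis unfolding wit_diff[OF n assms] .
qed

lemma in_upper: assumes "1 \<le> d" "r + d < n" shows "unit_mat n r (r+d) \<in> V"
proof (cases "d = n - 1")
  case True
  then have r: "r = 0" using assms by auto
  have "Jp n (n-1) \<in> V" using n lo hi by (intro word_in_span) auto
  then show ?thesis using wit_top[OF n] True r by simp
next
  case False
  then have d2: "d \<le> n - 2" using assms by auto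
  show ?thesis using assms(2)
  proof (induction r)
    case 0
    have "word_prod n (replicate (n-1) (Jblock n) @ Bmat n # replicate (d-1) (Jblock n)) \<in> V"
      using assms d2 n lo hi by (intro word_in_span) auto
    then have "unit_mat n 0 d \<in> V" unfolding wit_upper0[OF n assms(1) "0"[simplified]] by (rule span_smult[OF _ Vc])
    then show ?case by simp
  next
    case (Suc r)
    have a: "unit_mat n r (r+d) \<in> V" using Suc by simp
    have b: "unit_mat n r (r+d) - unit_mat n (r+1) (r+1+d) \<in> V" using Suc by (intro in_diff) simp
    have "unit_mat n r (r+d) - (unit_mat n r (r+d) - unit_mat n (r+1) (r+1+d)) \<in> V"
      by (rule span_diff[OF a b Vc])
    then show ?case by (simp add: sub_sub[OF unit_carrier unit_carrier])
  qed
qed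

lemma in_offdiag_to_all:
  assumes diag: "\<And>q. q < n \<Longrightarrow> unit_mat n q q \<in> V"
  shows "carrier_mat n n \<subseteq> V"
proof
  fix X :: "complex mat" assume X: "X \<in> carrier_mat n n"
  have units: "\<And>a b. a < n \<Longrightarrow> b < n \<Longrightarrow> unit_mat n a b \<in> V"
  proof -
    fix a b assume ab: "a < n" "b < n"
    consider "b < a" | "a = b" | "a < b" by linarith
    then show "unit_mat n a b \<in> V"
    proof cases
      case 1 then show ?thesis using in_lower ab by auto
    next
      case 2 then show ?thesis using diag ab by auto
    next
      case 3 then show ?thesis using in_upper[of "b - a" a] ab by auto
    qed
  qed
  define L where "L = List.product [0..<n] [0..<n]"
  define cs where "cs = map (\<lambda>(a,b). (X $$ (a,b), unit_mat n a b :: complex mat)) L"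
  have cs_sub: "set (map snd cs) \<subseteq> V" unfolding cs_def L_def using units by auto
  have cs_car: "set (map snd cs) \<subseteq> carrier_mat n n" unfolding cs_def by auto
  have "X = lin_comb n cs"
  proof (rule eq_matI)
    show "dim_row X = dim_row (lin_comb n cs)" "dim_col X = dim_col (lin_comb n cs)"
      using X lin_comb_carrier[OF cs_car] by auto
    fix i j assume "i < dim_row (lin_comb n cs)" "j < dim_col (lin_comb n cs)"
    then have ij: "i < n" "j < n" using lin_comb_carrier[OF cs_car] by auto
    have "lin_comb n cs $$ (i,j) = (\<Sum>(c,A)\<leftarrow>cs. c * A $$ (i,j))" by (rule lin_comb_index[OF cs_car ij])
    also have "\<dots> = sum_list (map (\<lambda>(a,b). X $$ (a,b) * unit_mat n a b $$ (i,j)) L)"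
      unfolding cs_def by (induction L) auto
    also have "\<dots> = sum (\<lambda>(a,b). X $$ (a,b) * unit_mat n a b $$ (i,j)) (set L)"
      unfolding L_def by (rule sum_list_distinct_conv_sum_set) (simp add: distinct_product)
    also have "\<dots> = sum (\<lambda>x. if x = (i,j) then X $$ (i,j) else 0) ({0..<n} \<times> {0..<n})"
      unfolding L_def using ij by (intro sum.cong) (auto simp: unit_index split: if_splits)
    also have "\<dots> = X $$ (i,j)" using ij by (simp add: sum.delta)
    finally show "X $$ (i,j) = lin_comb n cs $$ (i,j)" by simp
  qed
  then show "X \<in> V" using span_lin_comb[OF cs_sub Vc] by simp
qed

end



lemma diag0:
  assumes n: "3 \<le> n" and hi: "2*n-3 \<le> hi" and q: "q < n"
  shows "unit_mat n q q \<in> mat_span n (words n {Jblock n, Bmat n} 0 hi)"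
proof -
  let ?V = "mat_span n (words n {Jblock n, Bmat n} 0 hi)"
  have Vc: "words n {Jblock n, Bmat n} 0 hi \<subseteq> carrier_mat n n" by (rule words_carrier)
  have D: "\<And>r. r + 1 < n \<Longrightarrow> unit_mat n r r - unit_mat n (Suc r) (Suc r) \<in> ?V"
    using in_diff[OF n _ hi, where lo=0 and d=0] by simp
  have s1: "\<And>r. r < n \<Longrightarrow> unit_mat n 0 0 - unit_mat n r r \<in> ?V"
  proof -
    fix r show "r < n \<Longrightarrow> unit_mat n 0 0 - unit_mat n r r \<in> ?V"
    proof (induction r)
      case 0 then show ?case using span_zero by (simp add: sub_self[OF unit_carrier])
    next
      case (Suc r)
      have "(unit_mat n 0 0 - unit_mat n r r) + (unit_mat n r r - unit_mat n (Suc r) (Suc r)) \<in> ?V"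
        using Suc D by (intro span_add[OF _ _ Vc]) auto
      then show ?case by (simp add: sub_add[OF unit_carrier unit_carrier unit_carrier])
    qed
  qed
  have I: "1\<^sub>m n \<in> ?V" using word_in_span[of "[]" n 0 hi] by (simp add: word_prod_Nil)
  define cs where "cs = map (\<lambda>r. (1::complex, unit_mat n 0 0 - unit_mat n r r :: complex mat)) [0..<n]"
  have cs_sub: "set (map snd cs) \<subseteq> ?V" unfolding cs_def using s1 by auto
  have cs_car: "set (map snd cs) \<subseteq> carrier_mat n n" unfolding cs_def by auto
  have M: "1\<^sub>m n + lin_comb n cs \<in> ?V" by (rule span_add[OF I span_lin_comb[OF cs_sub Vc] Vc])
  have Meq: "1\<^sub>m n + lin_comb n cs = of_nat n \<cdot>\<^sub>m unit_mat n 0 0"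
  proof (rule eq_matI)
    show "dim_row (1\<^sub>m n + lin_comb n cs) = dim_row (of_nat n \<cdot>\<^sub>m (unit_mat n 0 0 :: complex mat))"
      "dim_col (1\<^sub>m n + lin_comb n cs) = dim_col (of_nat n \<cdot>\<^sub>m (unit_mat n 0 0 :: complex mat))"
      using lin_comb_carrier[OF cs_car] by auto
    fix i j assume "i < dim_row (of_nat n \<cdot>\<^sub>m (unit_mat n 0 0 :: complex mat))" "j < dim_col (of_nat n \<cdot>\<^sub>m (unit_mat n 0 0 :: complex mat))"
    then have ij: "i < n" "j < n" by auto
    have "lin_comb n cs $$ (i,j) = (\<Sum>(c,A)\<leftarrow>cs. c * A $$ (i,j))" by (rule lin_comb_index[OF cs_car ij])
    also have "\<dots> = (\<Sum>r\<leftarrow>[0..<n]. (if i = 0 \<and> j = 0 then 1 else 0) - (if i = r \<and> j = r then 1 else 0))"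
      unfolding cs_def using ij by (simp add: comp_def unit_index)
    also have "\<dots> = (\<Sum>r\<in>{0..<n}. (if i = 0 \<and> j = 0 then 1 else 0) - (if i = r \<and> j = r then 1 else 0))"
      by (simp add: sum_list_distinct_conv_sum_set)
    also have "\<dots> = of_nat n * (if i = 0 \<and> j = 0 then 1 else 0) - (if i = j then 1 else 0)"
    proof -
      have "(\<Sum>r\<in>{0..<n}. if i = r \<and> j = r then (1::complex) else 0) = (if i = j then 1 else 0)"
        using ij by (cases "i = j") (auto intro!: sum.neutral)
      then show ?thesis by (simp add: sum_subtractf)
    qed
    finally show "(1\<^sub>m n + lin_comb n cs) $$ (i,j) = (of_nat n \<cdot>\<^sub>m (unit_mat n 0 0 :: complex mat)) $$ (i,j)"
      using ij lin_comb_carrier[OF cs_car] by (simp add: unit_index)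
  qed
  have "(1 / of_nat n) \<cdot>\<^sub>m (1\<^sub>m n + lin_comb n cs) \<in> ?V" by (rule span_smult[OF M Vc])
  moreover have "(1 / of_nat n) \<cdot>\<^sub>m (1\<^sub>m n + lin_comb n cs) = unit_mat n 0 0"
    unfolding Meq using n by (intro eq_matI) auto
  ultimately have A0: "unit_mat n 0 0 \<in> ?V" by simp
  show ?thesis using q
  proof (induction q)
    case 0 then show ?case using A0 by simp
  next
    case (Suc r)
    have a: "unit_mat n r r \<in> ?V" using Suc by simp
    have b: "unit_mat n r r - unit_mat n (Suc r) (Suc r) \<in> ?V" using Suc D by simp
    have "unit_mat n r r - (unit_mat n r r - unit_mat n (Suc r) (Suc r)) \<in> ?V"
      by (rule span_diff[OF a b Vc])
    then show ?case using sub_sub[OF unit_carrier unit_carrier, of n r r "Suc r" "Suc r"] by simp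
  qed
qed

lemma diag1:
  assumes n: "3 \<le> n" and hi: "2*n-2 \<le> hi" and q: "q < n"
  shows "unit_mat n q q \<in> mat_span n (words n {Jblock n, Bmat n} 1 hi)"
proof -
  let ?V = "mat_span n (words n {Jblock n, Bmat n} 1 hi)"
  have Vc: "words n {Jblock n, Bmat n} 1 hi \<subseteq> carrier_mat n n" by (rule words_carrier)
  have hi': "2*n-3 \<le> hi" using hi by simp
  have D: "\<And>r. r + 1 < n \<Longrightarrow> unit_mat n r r - unit_mat n (r+1) (r+1) \<in> ?V"
    using in_diff[OF n _ hi', where lo=1 and d=0] by simp
  have P: "\<And>r. r + 1 < n \<Longrightarrow> unit_mat n r r + unit_mat n (r+1) (r+1) \<in> ?V"
  proof -
    fix r assume r: "r + 1 < n"
    have "word_prod n (replicate (n-2-r) (Jblock n) @ Bmat n # replicate (n-2) (Jblock n) @ Bmat n # replicate r (Jblock n)) \<in> ?V"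
      using r n hi by (intro word_in_span) auto
    then show "unit_mat n r r + unit_mat n (r+1) (r+1) \<in> ?V" using wit_pair[OF n r] by simp
  qed
  show ?thesis
  proof (cases "q + 1 < n")
    case True
    have "(1/2) \<cdot>\<^sub>m ((unit_mat n q q + unit_mat n (q+1) (q+1)) + (unit_mat n q q - unit_mat n (q+1) (q+1))) \<in> ?V"
      using P[OF True] D[OF True] by (intro span_smult[OF span_add[OF _ _ Vc] Vc])
    moreover have "(1/2) \<cdot>\<^sub>m ((unit_mat n q q + unit_mat n (q+1) (q+1)) + (unit_mat n q q - unit_mat n (q+1) (q+1))) = (unit_mat n q q :: complex mat)"
      by (intro eq_matI) (auto simp: unit_index)
    ultimately show ?thesis by simp
  next
    case False
    then have qq: "q = (n-2) + 1" using q n by auto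
    have T: "n - 2 + 1 < n" using n by auto
    have "(1/2) \<cdot>\<^sub>m ((unit_mat n (n-2) (n-2) + unit_mat n (n-2+1) (n-2+1)) - (unit_mat n (n-2) (n-2) - unit_mat n (n-2+1) (n-2+1))) \<in> ?V"
      using P[OF T] D[OF T] by (intro span_smult[OF span_diff[OF _ _ Vc] Vc])
    moreover have "(1/2) \<cdot>\<^sub>m ((unit_mat n (n-2) (n-2) + unit_mat n (n-2+1) (n-2+1)) - (unit_mat n (n-2) (n-2) - unit_mat n (n-2+1) (n-2+1))) = (unit_mat n (n-2+1) (n-2+1) :: complex mat)"
      by (intro eq_matI) (auto simp: unit_index)
    ultimately show ?thesis using qq by simp
  qed
qed



lemma LB_all:
  assumes n: "3 \<le> n" and lo: "lo \<le> 1" and y: "Suc y \<le> 2*n-3"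
  shows "mat_span n (words n {Jblock n, Bmat n} lo y) \<noteq> mat_span n (words n {Jblock n, Bmat n} lo (Suc y))"
proof (cases "Suc y < n")
  case True then show ?thesis using LB1[OF n lo] by simp
next
  case False
  define m where "m = Suc y - (n - 1)"
  have "1 \<le> m" "m \<le> n - 2" "Suc y = n - 1 + m" using False y n unfolding m_def by auto
  then show ?thesis using LB2[OF n lo] by blast
qed

lemma all_in:
  assumes n: "3 \<le> n" and hi: "2*n-3 \<le> hi"
  shows "mat_span n (words n {Jblock n, Bmat n} 0 hi) = carrier_mat n n"
proof
  show "mat_span n (words n {Jblock n, Bmat n} 0 hi) \<subseteq> carrier_mat n n"
    by (rule span_carrier[OF words_carrier])
  show "carrier_mat n n \<subseteq> mat_span n (words n {Jblock n, Bmat n} 0 hi)"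
    by (rule in_offdiag_to_all[OF n _ hi]) (use diag0[OF n hi] in auto)
qed

lemma all_in1:
  assumes n: "3 \<le> n" and hi: "2*n-2 \<le> hi"
  shows "mat_span n (words n {Jblock n, Bmat n} 1 hi) = carrier_mat n n"
proof
  show "mat_span n (words n {Jblock n, Bmat n} 1 hi) \<subseteq> carrier_mat n n"
    by (rule span_carrier[OF words_carrier])
  have hi': "2*n-3 \<le> hi" using hi by simp
  show "carrier_mat n n \<subseteq> mat_span n (words n {Jblock n, Bmat n} 1 hi)"
    by (rule in_offdiag_to_all[OF n _ hi']) (use diag1[OF n hi] in auto)
qed

theorem mainTheorem6:
  fixes n :: nat
  assumes "n \<ge> 3"
  shows "Lalg n {Jblock n, Bmat n} = carrier_mat n n
       \<and> lenL n {Jblock n, Bmat n} = 2*n - 3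
       \<and> lenL0 n {Jblock n, Bmat n} = 2*n - 2"
proof (intro conjI)
  have n: "3 \<le> n" using assms by simp
  show "Lalg n {Jblock n, Bmat n} = carrier_mat n n"
  proof
    show "Lalg n {Jblock n, Bmat n} \<subseteq> carrier_mat n n"
      unfolding Lalg_def Lk_def using span_carrier[OF words_carrier] by blast
    show "carrier_mat n n \<subseteq> Lalg n {Jblock n, Bmat n}"
      unfolding Lalg_def Lk_def using all_in[OF n order_refl] by blast
  qed
  show "lenL n {Jblock n, Bmat n} = 2*n - 3"
    unfolding lenL_def
  proof (rule Least_equality)
    show "Lk n {Jblock n, Bmat n} (2*n-3) = Lk n {Jblock n, Bmat n} (Suc (2*n-3))"
      unfolding Lk_def using all_in[OF n order_refl] all_in[OF n, of "Suc (2*n-3)"] by simp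
    fix y assume eq: "Lk n {Jblock n, Bmat n} y = Lk n {Jblock n, Bmat n} (Suc y)"
    show "2*n-3 \<le> y"
    proof (rule ccontr)
      assume "\<not> 2*n-3 \<le> y"
      then have sy: "Suc y \<le> 2*n-3" by simp
      show False using LB_all[OF n _ sy, of 0] eq unfolding Lk_def by simp
    qed
  qed
  show "lenL0 n {Jblock n, Bmat n} = 2*n - 2"
    unfolding lenL0_def
  proof (rule Least_equality)
    show "L0k n {Jblock n, Bmat n} (2*n-2) = L0k n {Jblock n, Bmat n} (Suc (2*n-2))"
      unfolding L0k_def using all_in1[OF n order_refl] all_in1[OF n, of "Suc (2*n-2)"] by simp
    fix y assume eq: "L0k n {Jblock n, Bmat n} y = L0k n {Jblock n, Bmat n} (Suc y)"
    show "2*n-2 \<le> y"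
    proof (rule ccontr)
      assume "\<not> 2*n-2 \<le> y"
      then consider "Suc y \<le> 2*n-3" | "y = 2*n-3" using n by linarith
      then show False
      proof cases
        case 1 then show False using LB_all[OF n _ 1, of 1] eq unfolding L0k_def by simp
      next
        case 2 then show False using LB0[OF n] eq unfolding L0k_def by simp
      qed
    qed
  qed
qed

end
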